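(* Fix $\beta \in (0,1)$ and $r \ge 0$ with $r < \beta$. Consider the following normal model. Let $m = \lfloor n^{1-\beta}\rfloor$, and let $\mathscr{F}\subset[n]$ be a uniformly random subset of size $m$. Set $\mu_i = \sqrt{2r\log n}$ for $i\in\mathscr{F}$ and $\mu_i=0$ otherwise. Let $X_i \sim \mathcal{N}(\mu_i,1)$ be independent, and test the null hypotheses $\mu_i = 0$. Then for any natural multiple testing procedure $\mathscr{R}$, $$\liminf_{n\to\infty}\big(\mathrm{FDR}(\mathscr{R}) + \mathrm{FNR}(\mathscr{R})\big) \ge 1.$$
   Context: A multiple testing procedure $\mathscr{R}$ maps the data $\mathbf{X}=(X_1,\dots,X_n)$ to a set $\mathscr{R}(\mathbf{X})\subset[n]$ of rejected hypotheses. For a rejection set $\mathscr{R}$: - $\mathrm{FDP}(\mathscr{R}) = |\mathscr{R}\setminus\mathscr{F}|/|\mathscr{R}|$, - $\mathrm{FNP}(\mathscr{R}) = |\mathscr{F}\setminus\mathscr{R}|/|\mathscr{F}|$, with $0/0=0$. Further, $\mathrm{FDR}=\mathbb{E}[\mathrm{FDP}(\mathscr{R}(\mathbf{X}))]$ and $\mathrm{FNR}=\mathbb{E}[\mathrm{FNP}(\mathscr{R}(\mathbf{X}))]$, and the risk is $\mathrm{FDR}+\mathrm{FNR}$. A procedure is natural if it has all three of the following properties: - it is permutation invariant, i.e., invariant under reordering of its $n$ input variables; - it is a threshold procedure, i.e., $\mathscr{R}(\mathbf{X})=\{i : X_i \ge \tau(\mathbf{X})\}$ for some function $\tau$; - it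 is monotonic, i.e., for any $i\in\mathscr{R}(\mathbf{X})$, increasing $X_i$ leaves $\mathscr{R}$ unchanged. *)

theory Defs
  imports "HOL-Probability.Probability"
begin

definition FDP :: "nat set \<Rightarrow> nat set \<Rightarrow> real" where
  "FDP R F = (if R = {} then 0 else real (card (R - F)) / real (card R))"

definition FNP :: "nat set \<Rightarrow> nat set \<Rightarrow> real" where
  "FNP R F = (if F = {} then 0 else real (card (F - R)) / real (card F))"

text \<open>A procedure for sample size n maps data x in R^n (encoded as extensional
  functions on {..<n}) to a set of rejected indices.  Natural procedures:\<close>
definition natural_proc :: "nat \<Rightarrow> ((nat \<Rightarrow> real) \<Rightarrow> nat set) \<Rightarrow> bool" where
  "natural_proc n R \<longleftrightarrow>
     (\<forall>x \<in> {..<n} \<rightarrow>\<^sub>E (UNIV::real set). \<forall>\<sigma>. \<sigma> permutes {..<n} \<longrightarrow>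
         R (x \<circ> \<sigma>) = {i. i < n \<and> \<sigma> i \<in> R x})
   \<and> (\<exists>\<tau> :: (nat \<Rightarrow> real) \<Rightarrow> real. \<forall>x \<in> {..<n} \<rightarrow>\<^sub>E (UNIV::real set).
         R x = {i. i < n \<and> \<tau> x \<le> x i})
   \<and> (\<forall>x \<in> {..<n} \<rightarrow>\<^sub>E (UNIV::real set). \<forall>i \<in> R x. \<forall>t. x i \<le> t \<longrightarrow>
         R (x(i := t)) = R x)"

definition m_of :: "real \<Rightarrow> nat \<Rightarrow> nat" where
  "m_of \<beta> n = nat \<lfloor>real n powr (1 - \<beta>)\<rfloor>"

definition support_dist :: "real \<Rightarrow> nat \<Rightarrow> nat set pmf" where
  "support_dist \<beta> n = pmf_of_set {F. F \<subseteq> {..<n} \<and> card F = m_of \<beta> n}"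

definition mu :: "real \<Rightarrow> nat \<Rightarrow> nat set \<Rightarrow> nat \<Rightarrow> real" where
  "mu r n F i = (if i \<in> F then sqrt (2 * r * ln (real n)) else 0)"

definition data_dist :: "real \<Rightarrow> nat \<Rightarrow> nat set \<Rightarrow> (nat \<Rightarrow> real) measure" where
  "data_dist r n F = PiM {..<n} (\<lambda>i. density lborel (normal_density (mu r n F i) 1))"

definition FDR :: "real \<Rightarrow> real \<Rightarrow> nat \<Rightarrow> ((nat \<Rightarrow> real) \<Rightarrow> nat set) \<Rightarrow> real" where
  "FDR \<beta> r n R = measure_pmf.expectation (support_dist \<beta> n)
      (\<lambda>F. \<integral>x. FDP (R x) F \<partial>data_dist r n F)"

definition FNR :: "real \<Rightarrow> real \<Rightarrow> nat \<Rightarrow> ((nat \<Rightarrow> real) \<Rightarrow> nat set) \<Rightarrow> real" where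
  "FNR \<beta> r n R = measure_pmf.expectation (support_dist \<beta> n)
      (\<lambda>F. \<integral>x. FNP (R x) F \<partial>data_dist r n F)"

end

theory Submission
  imports Defs "HOL-Real_Asymp.Real_Asymp"
begin



lemma pointwise:
  fixes x :: "nat \<Rightarrow> real" and F :: "nat set" and n :: nat and \<tau> t0 :: real
  assumes F: "F \<subseteq> {..<n}" "F \<noteq> {}"
  shows "FDP {i. i<n \<and> \<tau> \<le> x i} F + FNP {i. i<n \<and> \<tau> \<le> x i} F \<ge>
     1 - real (card {i\<in>F. t0 \<le> x i}) / real (card F)
       - real (card F) / (real (card {i\<in>{..<n}-F. t0 \<le> x i}) + real (card F))"
    (is "FDP ?R F + FNP ?R F \<ge> 1 - real ?S / real ?m - real ?m / (real ?V + real ?m)")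
proof -
  have finF: "finite F" using F finite_subset by blast
  have m0: "real ?m > 0" using finF F by (simp add: card_gt_0_iff)
  have finR: "finite ?R" by simp
  have FDP0: "FDP ?R F \<ge> 0" by (simp add: FDP_def)
  have FNP0: "FNP ?R F \<ge> 0" by (simp add: FNP_def)
  have t1: "real ?S / real ?m \<ge> 0" "real ?m / (real ?V + real ?m) \<ge> 0" by auto
  show ?thesis
  proof (cases "t0 \<le> \<tau>")
    case True
    have sub: "F \<inter> ?R \<subseteq> {i\<in>F. t0 \<le> x i}" using True by auto
    have c1: "card (F \<inter> ?R) \<le> ?S" by (rule card_mono) (use finF sub in auto)
    have c2: "card (F - ?R) + card (F \<inter> ?R) = ?m"
      using card_Int_Diff[OF finF, of ?R] by simp
    have "FNP ?R F = real (card (F - ?R)) / real ?m" using F by (simp add: FNP_def)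
    also have "\<dots> = 1 - real (card (F \<inter> ?R)) / real ?m"
      using c2 m0 by (simp add: field_simps)
    also have "\<dots> \<ge> 1 - real ?S / real ?m"
      using c1 m0 by (simp add: divide_right_mono)
    finally show ?thesis using FDP0 t1 by linarith
  next
    case False
    have sub: "{i\<in>{..<n}-F. t0 \<le> x i} \<subseteq> ?R - F" using False by auto
    have cV: "?V \<le> card (?R - F)" by (rule card_mono) (use sub in auto)
    have cR: "card ?R \<le> card (?R - F) + ?m"
    proof -
      have "?R \<subseteq> (?R - F) \<union> F" by auto
      then have "card ?R \<le> card ((?R - F) \<union> F)" by (rule card_mono[rotated]) (use finF in auto)
      also have "\<dots> \<le> card (?R - F) + ?m" by (rule card_Un_le)
      finally show ?thesis .
    qed
    have "1 - real ?m / (real ?V + real ?m) \<le> FDP ?R F"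
    proof (cases "?R = {}")
      case True
      have e: "{i\<in>{..<n}-F. t0 \<le> x i} = {}" using sub True by blast
      have V0: "?V = 0" by (subst e) simp
      show ?thesis unfolding V0 using m0 FDP0 by simp
    next
      case Rne: False
      define a where "a = card (?R - F)"
      have "1 - real ?m / (real ?V + real ?m) = real ?V / (real ?V + real ?m)"
        using m0 by (simp add: field_simps)
      also have "\<dots> \<le> real a / (real a + real ?m)"
        using cV m0 unfolding a_def by (simp add: field_simps)
      also have "\<dots> \<le> real a / real (card ?R)"
      proof (cases "a = 0")
        case False
        have "card ?R > 0" using Rne finR by (simp add: card_gt_0_iff)
        then show ?thesis using cR False unfolding a_def
          by (intro divide_left_mono) auto
      qed simp
      also have "\<dots> = FDP ?R F" using Rne by (simp add: FDP_def a_def)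
      finally show ?thesis .
    qed
    then show ?thesis using FNP0 t1 by linarith
  qed
qed




lemma (in prob_space) conc:
  fixes A :: "nat \<Rightarrow> 'a set" and N :: "nat set" and p c :: real
  assumes fin: "finite N" and ne: "N \<noteq> {}" and ev: "\<And>i. i\<in>N \<Longrightarrow> A i \<in> events"
   and pA: "\<And>i. i\<in>N \<Longrightarrow> prob (A i) = p"
   and pAA: "\<And>i j. i\<in>N \<Longrightarrow> j\<in>N \<Longrightarrow> i\<noteq>j \<Longrightarrow> prob (A i \<inter> A j) = p*p"
   and p: "p > 0" and c: "c > 0"
  shows "expectation (\<lambda>x. c / ((\<Sum>i\<in>N. indicator (A i) x) + c)) \<le> (4 + 2*c) / (real (card N) * p)"
proof -
  define V where "V = (\<lambda>x. (\<Sum>i\<in>N. indicator (A i) x :: real))"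
  define k where "k = real (card N)"
  have k: "k > 0" using fin ne by (simp add: k_def card_gt_0_iff)
  have kp: "k * p > 0" using k p by simp
  have Vnn: "V x \<ge> 0" for x unfolding V_def by (intro sum_nonneg) auto
  have Vm[measurable]: "V \<in> borel_measurable M" unfolding V_def using ev by measurable
  have intI: "integrable M (indicator B :: 'a \<Rightarrow> real)" if "B \<in> events" for B
    using that by (intro integrable_const_bound[where B=1]) (auto simp: indicator_def)
  have intV: "integrable M V" unfolding V_def using ev intI by auto
  have EV: "expectation V = k * p" unfolding V_def k_def
    using ev pA intI by (simp add: Bochner_Integration.integral_sum sets.Int_space_eq2)
  have V2: "(V x)\<^sup>2 = (\<Sum>i\<in>N. \<Sum>j\<in>N. indicator (A i \<inter> A j) x)" for x
    unfolding V_def power2_eq_square sum_product indicator_inter_arith by simp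
  have evAA: "A i \<inter> A j \<in> events" if "i \<in> N" "j \<in> N" for i j using ev that by auto
  have intV2: "integrable M (\<lambda>x. (V x)\<^sup>2)" unfolding V2 using evAA intI by auto
  have "expectation (\<lambda>x. (V x)\<^sup>2) = (\<Sum>i\<in>N. \<Sum>j\<in>N. prob (A i \<inter> A j))"
    unfolding V2 using evAA intI
    by (simp add: Bochner_Integration.integral_sum sets.Int_space_eq2)
  also have "\<dots> \<le> (\<Sum>i\<in>N. \<Sum>j\<in>N. (p*p + (if i = j then p else 0)))"
  proof (intro sum_mono)
    fix i j assume "i \<in> N" "j \<in> N"
    then show "prob (A i \<inter> A j) \<le> p*p + (if i = j then p else 0)"
      using pA pAA p by (cases "i = j") auto
  qed
  also have "\<dots> = k * (k * (p*p) + p)"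
    using fin unfolding k_def by (simp add: sum.distrib)
  finally have EV2: "expectation (\<lambda>x. (V x)\<^sup>2) \<le> k * (k * (p*p) + p)" .
  have var: "variance V \<le> k * p"
    using EV2 EV intV intV2 by (subst variance_eq) (auto simp: power2_eq_square algebra_simps)
  define B where "B = {x\<in>space M. \<bar>V x - expectation V\<bar> \<ge> k*p/2}"
  have Bev: "B \<in> events" unfolding B_def by measurable
  have cheb: "prob B \<le> variance V / (k*p/2)\<^sup>2"
    unfolding B_def by (rule Chebyshev_inequality) (use intV2 kp in auto)
  also have "\<dots> \<le> (k*p) / (k*p/2)\<^sup>2" using var kp by (intro divide_right_mono) auto
  also have "\<dots> = 4 / (k*p)" using kp by (simp add: field_simps power2_eq_square)
  finally have PB: "prob B \<le> 4 / (k*p)" .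
  have pw: "c / (V x + c) \<le> indicator B x + 2*c/(k*p)" if x: "x \<in> space M" for x
  proof (cases "x \<in> B")
    case True
    have "c / (V x + c) \<le> 1" using c Vnn[of x] by simp
    moreover have "2*c/(k*p) \<ge> 0" using c kp by simp
    ultimately show ?thesis using True by simp
  next
    case False
    then have "V x > k*p/2" using x EV unfolding B_def by (auto simp: abs_if split: if_splits)
    then have "c / (V x + c) \<le> c / (k*p/2)" using c kp
      by (intro divide_left_mono) auto
    also have "\<dots> = 2*c/(k*p)" by simp
    finally show ?thesis using False by simp
  qed
  have intf: "integrable M (\<lambda>x. c / (V x + c))"
  proof (intro integrable_const_bound[where B=1] AE_I2)
    fix x
    have "c / (V x + c) \<le> 1" using c Vnn[of x] by simp
    then show "norm (c / (V x + c)) \<le> 1" using c Vnn[of x] by simp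
  qed simp
  have "expectation (\<lambda>x. c / (V x + c)) \<le> expectation (\<lambda>x. indicator B x + 2*c/(k*p))"
    by (intro integral_mono intf) (use pw intI[OF Bev] in auto)
  also have "\<dots> = prob B + 2*c/(k*p)"
    using intI[OF Bev] Bev by (simp add: sets.Int_space_eq2 prob_space)
  also have "\<dots> \<le> (4 + 2*c) / (k*p)" using PB by (simp add: add_divide_distrib)
  finally show ?thesis unfolding V_def k_def by simp
qed




lemma dd_pps: "product_prob_space (\<lambda>i. density lborel (normal_density (mu r n F i) 1))"
  unfolding product_prob_space_def product_prob_space_axioms_def product_sigma_finite_def
  by (auto intro!: prob_space_normal_density prob_space_imp_sigma_finite)

lemma dd_prob_space: "prob_space (data_dist r n F)"
proof -
  interpret product_prob_space "\<lambda>i. density lborel (normal_density (mu r n F i) 1)" "{..<n}" by (rule dd_pps)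
  show ?thesis unfolding data_dist_def by (rule prob_space_PiM) (auto intro: prob_space_normal_density)
qed

lemma dd_sets: "sets (data_dist r n F) = sets (PiM {..<n} (\<lambda>_. borel :: real measure))"
  unfolding data_dist_def by (intro sets_PiM_cong) auto

lemma dd_space: "space (data_dist r n F) = {..<n} \<rightarrow>\<^sub>E (UNIV :: real set)"
  unfolding data_dist_def by (simp add: space_PiM)

lemma dd_single:
  assumes "i < n"
  shows "measure (data_dist r n F) {x\<in>space (data_dist r n F). t \<le> x i}
       = measure (density lborel (normal_density (mu r n F i) 1)) {x. t \<le> x}"
proof -
  interpret product_prob_space "\<lambda>i. density lborel (normal_density (mu r n F i) 1)" "{..<n}" by (rule dd_pps)
  have "emeasure (data_dist r n F) {x\<in>space (data_dist r n F). t \<le> x i}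
       = emeasure (density lborel (normal_density (mu r n F i) 1)) {x. t \<le> x}"
    unfolding data_dist_def using emeasure_PiM_Collect_single[of i "{x. t \<le> x}"] assms
    by simp
  then show ?thesis by (simp add: measure_def)
qed

lemma dd_pair:
  assumes "i < n" "j < n" "i \<noteq> j"
  shows "measure (data_dist r n F) ({x\<in>space (data_dist r n F). t \<le> x i} \<inter> {x\<in>space (data_dist r n F). t \<le> x j})
       = measure (density lborel (normal_density (mu r n F i) 1)) {x. t \<le> x}
       * measure (density lborel (normal_density (mu r n F j) 1)) {x. t \<le> x}"
proof -
  interpret product_prob_space "\<lambda>i. density lborel (normal_density (mu r n F i) 1)" "{..<n}" by (rule dd_pps)
  have eq: "{x\<in>space (data_dist r n F). t \<le> x i} \<inter> {x\<in>space (data_dist r n F). t \<le> x j}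
     = {x\<in>space (data_dist r n F). \<forall>k\<in>{i,j}. x k \<in> {x. t \<le> x}}" by auto
  have "emeasure (data_dist r n F) ({x\<in>space (data_dist r n F). t \<le> x i} \<inter> {x\<in>space (data_dist r n F). t \<le> x j})
       = (\<Prod>k\<in>{i,j}. emeasure (density lborel (normal_density (mu r n F k) 1)) {x. t \<le> x})"
    unfolding eq unfolding data_dist_def using assms
    by (intro emeasure_PiM_Collect) auto
  also have "\<dots> = ennreal (measure (density lborel (normal_density (mu r n F i) 1)) {x. t \<le> x}
       * measure (density lborel (normal_density (mu r n F j) 1)) {x. t \<le> x})"
    using assms by (simp add: M.emeasure_eq_measure ennreal_mult)
  finally show ?thesis by (simp add: measure_def)
qed




lemma normal_tail_upper:
  fixes \<mu> d :: real
  assumes "d > 0"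
  shows "measure (density lborel (normal_density \<mu> 1)) {x. \<mu> + d \<le> x} \<le> 1 / d\<^sup>2"
proof -
  define N where "N = density lborel (normal_density \<mu> 1)"
  interpret N: prob_space N unfolding N_def by (rule prob_space_normal_density) simp
  have sp: "space N = UNIV" unfolding N_def by simp
  have sN: "sets N = sets borel" unfolding N_def by simp
  have hb: "has_bochner_integral lborel (\<lambda>x. normal_density \<mu> 1 x * (x - \<mu>) ^ 2) 1"
    using normal_moment_even[where k=1 and \<mu>=\<mu> and \<sigma>=1] by (simp add: power2_eq_square)
  have int: "integrable N (\<lambda>x. (x - \<mu>)^2)"
    unfolding N_def using hb
    by (subst integrable_density) (auto simp: has_bochner_integral_iff)
  have eq: "(\<integral>x. (x - \<mu>)^2 \<partial>N) = 1"
    unfolding N_def using hb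
    by (subst integral_density) (auto simp: has_bochner_integral_iff)
  have "measure N {x\<in>space N. (x - \<mu>)^2 \<ge> d\<^sup>2} \<le> (\<integral>x. (x - \<mu>)^2 \<partial>N) / d\<^sup>2"
    by (rule integral_Markov_inequality_measure[OF int, where A="space N"]) (use assms in auto)
  also have "\<dots> = 1 / d\<^sup>2" using eq by simp
  finally have *: "measure N {x\<in>space N. (x - \<mu>)^2 \<ge> d\<^sup>2} \<le> 1 / d\<^sup>2" .
  have sub: "{x. \<mu> + d \<le> x} \<subseteq> {x\<in>space N. (x - \<mu>)^2 \<ge> d\<^sup>2}"
    using assms by (auto simp: sp intro!: power_mono)
  have "measure N {x. \<mu> + d \<le> x} \<le> measure N {x\<in>space N. (x - \<mu>)^2 \<ge> d\<^sup>2}"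
    by (rule N.finite_measure_mono[OF sub]) (auto simp: sN sp)
  with * show ?thesis unfolding N_def by simp
qed

lemma normal_tail_lower:
  fixes t :: real
  assumes "t \<ge> 0"
  shows "measure (density lborel (normal_density 0 1)) {x. t \<le> x} \<ge> normal_density 0 1 (t + 1)"
proof -
  define N where "N = density lborel (normal_density 0 1)"
  interpret N: prob_space N unfolding N_def by (rule prob_space_normal_density) simp
  have "ennreal (normal_density 0 1 (t + 1)) = (\<integral>\<^sup>+ x. ennreal (normal_density 0 1 (t + 1)) * indicator {t..t+1} x \<partial>lborel)"
    by (simp add: nn_integral_cmult_indicator)
  also have "\<dots> \<le> (\<integral>\<^sup>+ x. ennreal (normal_density 0 1 x) * indicator {x. t \<le> x} x \<partial>lborel)"
  proof (rule nn_integral_mono)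
    fix x
    show "ennreal (normal_density 0 1 (t + 1)) * indicator {t..t+1} x \<le> ennreal (normal_density 0 1 x) * indicator {x. t \<le> x} x"
    proof (cases "x \<in> {t..t+1}")
      case True
      then have "x\<^sup>2 \<le> (t+1)\<^sup>2" using assms by (auto intro!: power_mono)
      then have "normal_density 0 1 (t + 1) \<le> normal_density 0 1 x"
        by (auto simp: normal_density_def intro!: divide_right_mono)
      then show ?thesis using True by (auto simp: indicator_def)
    qed (auto simp: indicator_def)
  qed
  also have "\<dots> = emeasure N {x. t \<le> x}"
    unfolding N_def by (subst emeasure_density) auto
  finally show ?thesis unfolding N_def[symmetric] N.emeasure_eq_measure by simp
qed




lemma inner_bound:
  fixes r t0 :: real and n :: nat and F :: "nat set" and Rn :: "(nat \<Rightarrow> real) \<Rightarrow> nat set"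
  assumes F: "F \<subseteq> {..<n}" "F \<noteq> {}" and NF: "{..<n} - F \<noteq> {}"
    and nat: "natural_proc n Rn"
    and meas: "Rn \<in> measurable (PiM {..<n} (\<lambda>_. borel :: real measure)) (count_space UNIV)"
    and p0: "measure (density lborel (normal_density 0 1)) {x. t0 \<le> x} > 0"
  shows "(\<integral>x. FDP (Rn x) F \<partial>data_dist r n F) + (\<integral>x. FNP (Rn x) F \<partial>data_dist r n F) \<ge>
     1 - measure (density lborel (normal_density (sqrt (2 * r * ln (real n))) 1)) {x. t0 \<le> x}
       - (4 + 2 * real (card F)) / (real (card ({..<n} - F)) * measure (density lborel (normal_density 0 1)) {x. t0 \<le> x})"
proof -
  define M where "M = data_dist r n F"
  interpret M: prob_space M unfolding M_def by (rule dd_prob_space)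
  define q where "q = measure (density lborel (normal_density (sqrt (2 * r * ln (real n))) 1)) {x. t0 \<le> x}"
  define p where "p = measure (density lborel (normal_density 0 1)) {x. t0 \<le> x}"
  define m where "m = real (card F)"
  define N where "N = {..<n} - F"
  have finF: "finite F" using F finite_subset by blast
  have m0: "m > 0" using finF F by (simp add: m_def card_gt_0_iff)
  have sM: "sets M = sets (PiM {..<n} (\<lambda>_. borel :: real measure))" unfolding M_def by (rule dd_sets)
  have spM: "space M = {..<n} \<rightarrow>\<^sub>E (UNIV :: real set)" unfolding M_def by (rule dd_space)
  have spM': "space M = space (PiM {..<n} (\<lambda>_. borel :: real measure))" using sets_eq_imp_space_eq[OF sM] .
  have Rm: "Rn \<in> measurable M (count_space UNIV)"
    using meas by (subst measurable_cong_sets[OF sM refl])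
  have FDPm[measurable]: "(\<lambda>x. FDP (Rn x) F) \<in> borel_measurable M"
    by (rule measurable_compose[OF Rm]) simp
  have FNPm[measurable]: "(\<lambda>x. FNP (Rn x) F) \<in> borel_measurable M"
    by (rule measurable_compose[OF Rm]) simp
  have FDPb: "0 \<le> FDP A F" "FDP A F \<le> 1" for A
  proof -
    show "0 \<le> FDP A F" by (simp add: FDP_def)
    show "FDP A F \<le> 1"
    proof (cases "finite A")
      case True
      then have "card (A - F) \<le> card A" by (intro card_mono) auto
      then show ?thesis by (auto simp: FDP_def divide_le_eq_1)
    qed (simp add: FDP_def)
  qed
  have FNPb: "0 \<le> FNP A F" "FNP A F \<le> 1" for A
  proof -
    show "0 \<le> FNP A F" by (simp add: FNP_def)
    have "card (F - A) \<le> card F" using finF by (intro card_mono) auto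
    then show "FNP A F \<le> 1" by (auto simp: FNP_def divide_le_eq_1)
  qed
  have intFDP: "integrable M (\<lambda>x. FDP (Rn x) F)"
    by (intro M.integrable_const_bound[where B=1] AE_I2) (use FDPb in auto)
  have intFNP: "integrable M (\<lambda>x. FNP (Rn x) F)"
    by (intro M.integrable_const_bound[where B=1] AE_I2) (use FNPb in auto)
  define A where "A = (\<lambda>i. {x\<in>space M. t0 \<le> x i})"
  have Aev: "A i \<in> M.events" if "i < n" for i
    unfolding A_def spM' sM using that by (intro sets_Collect_single') auto
  have muF: "mu r n F i = sqrt (2 * r * ln (real n))" if "i \<in> F" for i using that by (simp add: mu_def)
  have muN: "mu r n F i = 0" if "i \<in> N" for i using that by (simp add: mu_def N_def)
  have Nsub: "N \<subseteq> {..<n}" "finite N" unfolding N_def by auto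
  have pA: "M.prob (A i) = p" if "i \<in> N" for i
    using dd_single[of i n r F t0] that Nsub muN[OF that] unfolding A_def M_def p_def by auto
  have qA: "M.prob (A i) = q" if "i \<in> F" for i
    using dd_single[of i n r F t0] that F muF[OF that] unfolding A_def M_def q_def by auto
  have pAA: "M.prob (A i \<inter> A j) = p * p" if "i \<in> N" "j \<in> N" "i \<noteq> j" for i j
    using dd_pair[of i n j r F t0] that Nsub muN[OF that(1)] muN[OF that(2)]
    unfolding A_def M_def p_def by auto
  have conc: "M.expectation (\<lambda>x. m / ((\<Sum>i\<in>N. indicator (A i) x) + m)) \<le> (4 + 2*m) / (real (card N) * p)"
    by (rule M.conc) (use Nsub NF Aev pA pAA p0 m0 in \<open>auto simp: N_def p_def\<close>)
  have intI: "integrable M (indicator B :: _ \<Rightarrow> real)" if "B \<in> M.events" for B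
    using that by (intro M.integrable_const_bound[where B=1]) (auto simp: indicator_def)
  have ES: "M.expectation (\<lambda>x. (\<Sum>i\<in>F. indicator (A i) x) / m) = q"
  proof -
    have "M.expectation (\<lambda>x. (\<Sum>i\<in>F. indicator (A i) x) / m) = (\<Sum>i\<in>F. M.prob (A i)) / m"
      using Aev F intI by (simp add: Bochner_Integration.integral_sum sets.Int_space_eq2 subset_iff)
    also have "\<dots> = q" using qA m0 by (simp add: m_def)
    finally show ?thesis .
  qed
  have ex: "\<exists>\<tau> :: (nat \<Rightarrow> real) \<Rightarrow> real. \<forall>x \<in> {..<n} \<rightarrow>\<^sub>E (UNIV::real set).
         Rn x = {i. i < n \<and> \<tau> x \<le> x i}"
    using nat unfolding natural_proc_def by (rule conjunct1[OF conjunct2])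
  then obtain \<tau> where tau0: "\<forall>x \<in> {..<n} \<rightarrow>\<^sub>E (UNIV::real set). Rn x = {i. i < n \<and> \<tau> x \<le> x i}"
    by (elim exE)
  have tau: "Rn x = {i. i < n \<and> \<tau> x \<le> x i}" if "x \<in> {..<n} \<rightarrow>\<^sub>E (UNIV::real set)" for x
    using tau0 that by (rule bspec)
  have indA: "indicator (A i) x = (of_bool (t0 \<le> x i) :: real)" if "x \<in> space M" for x i
    using that unfolding A_def by (simp add: indicator_def)
  have pw: "FDP (Rn x) F + FNP (Rn x) F \<ge> 1 - (\<Sum>i\<in>F. indicator (A i) x) / m - m / ((\<Sum>i\<in>N. indicator (A i) x) + m)"
    if x: "x \<in> space M" for x
  proof -
    have e1: "(\<Sum>i\<in>F. indicator (A i) x) = real (card {i\<in>F. t0 \<le> x i})"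
      using finF indA[OF x] by (simp add: Int_def)
    have e2: "(\<Sum>i\<in>N. indicator (A i) x) = real (card {i\<in>{..<n}-F. t0 \<le> x i})"
      using Nsub indA[OF x] by (simp add: Int_def N_def)
    have xs: "x \<in> {..<n} \<rightarrow>\<^sub>E (UNIV::real set)" using x spM by simp
    show ?thesis unfolding e1 e2 tau[OF xs] m_def
      by (rule pointwise) (use F in auto)
  qed
  have intS: "integrable M (\<lambda>x. (\<Sum>i\<in>F. indicator (A i) x) / m)"
    using Aev F intI by (auto simp: subset_iff)
  have intC: "integrable M (\<lambda>x. m / ((\<Sum>i\<in>N. indicator (A i) x) + m))"
  proof (intro M.integrable_const_bound[where B=1] AE_I2)
    fix x
    have "0 \<le> (\<Sum>i\<in>N. indicator (A i) x :: real)" by (intro sum_nonneg) auto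
    then show "norm (m / ((\<Sum>i\<in>N. indicator (A i) x) + m)) \<le> 1" using m0 by simp
  next
    show "(\<lambda>x. m / ((\<Sum>i\<in>N. indicator (A i) x) + m)) \<in> borel_measurable M"
      using Aev Nsub by (auto simp: subset_iff)
  qed
  have "1 - q - (4 + 2*m) / (real (card N) * p) \<le>
        M.expectation (\<lambda>x. 1 - (\<Sum>i\<in>F. indicator (A i) x) / m - m / ((\<Sum>i\<in>N. indicator (A i) x) + m))"
    using ES conc intS intC by (simp add: M.prob_space)
  also have "\<dots> \<le> M.expectation (\<lambda>x. FDP (Rn x) F + FNP (Rn x) F)"
    by (intro integral_mono) (use intS intC intFDP intFNP pw in auto)
  also have "\<dots> = M.expectation (\<lambda>x. FDP (Rn x) F) + M.expectation (\<lambda>x. FNP (Rn x) F)"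
    using intFDP intFNP by simp
  finally show ?thesis unfolding M_def q_def p_def m_def N_def .
qed




lemma outer_bound:
  fixes \<beta> r t0 :: real and n :: nat and Rn :: "(nat \<Rightarrow> real) \<Rightarrow> nat set"
  assumes m1: "1 \<le> m_of \<beta> n" and mn: "m_of \<beta> n < n"
    and nat: "natural_proc n Rn"
    and meas: "Rn \<in> measurable (PiM {..<n} (\<lambda>_. borel :: real measure)) (count_space UNIV)"
    and p0: "measure (density lborel (normal_density 0 1)) {x. t0 \<le> x} > 0"
  shows "FDR \<beta> r n Rn + FNR \<beta> r n Rn \<ge>
     1 - measure (density lborel (normal_density (sqrt (2 * r * ln (real n))) 1)) {x. t0 \<le> x}
       - (4 + 2 * real (m_of \<beta> n)) / ((real n - real (m_of \<beta> n)) * measure (density lborel (normal_density 0 1)) {x. t0 \<le> x})"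
    (is "_ \<ge> ?B")
proof -
  define m where "m = m_of \<beta> n"
  define S where "S = {F. F \<subseteq> {..<n} \<and> card F = m}"
  have finS: "finite S" unfolding S_def
    by (rule finite_subset[of _ "Pow {..<n}"]) auto
  have "{..<m} \<in> S" unfolding S_def using mn by (auto simp: m_def)
  then have neS: "S \<noteq> {}" by auto
  have D: "support_dist \<beta> n = pmf_of_set S" unfolding support_dist_def S_def m_def by simp
  have setD: "set_pmf (support_dist \<beta> n) = S" unfolding D using finS neS by simp
  define f where "f = (\<lambda>F. (\<integral>x. FDP (Rn x) F \<partial>data_dist r n F))"
  define g where "g = (\<lambda>F. (\<integral>x. FNP (Rn x) F \<partial>data_dist r n F))"
  have int: "integrable (measure_pmf (support_dist \<beta> n)) h" for h :: "nat set \<Rightarrow> real"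
    by (rule integrable_measure_pmf_finite) (simp add: setD finS)
  have "FDR \<beta> r n Rn + FNR \<beta> r n Rn = measure_pmf.expectation (support_dist \<beta> n) (\<lambda>F. f F + g F)"
    unfolding FDR_def FNR_def f_def g_def using int by simp
  also have "\<dots> \<ge> ?B"
  proof (rule measure_pmf.integral_ge_const[OF int], rule AE_pmfI)
    fix F assume "F \<in> set_pmf (support_dist \<beta> n)"
    then have F: "F \<subseteq> {..<n}" "card F = m" unfolding setD S_def by auto
    have Fne: "F \<noteq> {}" using F m1 by (auto simp: m_def)
    have cN: "card ({..<n} - F) = n - m" using F by (simp add: card_Diff_subset finite_subset)
    have NF: "{..<n} - F \<noteq> {}"
    proof
      assume e: "{..<n} - F = {}"
      have "n - m = 0" using cN unfolding e by simp
      with mn show False by (simp add: m_def)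
    qed
    have rN: "real (card ({..<n} - F)) = real n - real m" using cN mn by (simp add: m_def of_nat_diff)
    show "?B \<le> f F + g F"
      using inner_bound[OF F(1) Fne NF nat meas p0, of r] unfolding f_def g_def rN F(2) m_def[symmetric]
      by (simp add: m_def)
  qed
  finally show ?thesis .
qed





lemma lim_a: "0 < k \<Longrightarrow> ((\<lambda>n::nat. 1 / (k * ln (real n))) \<longlonglongrightarrow> 0)"
  by real_asymp

lemma lim_b: "0 < a \<Longrightarrow> 0 < c \<Longrightarrow> ((\<lambda>n::nat. exp (- a * ln (real n) + sqrt (2 * c * ln (real n)))) \<longlonglongrightarrow> 0)"
  by real_asymp

lemma ev_a: "0 < \<beta> \<Longrightarrow> eventually (\<lambda>n::nat. real n powr (1-\<beta>) \<le> real n / 2) sequentially"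
  by real_asymp

lemma per_n:
  fixes \<beta> r c :: real and n :: nat and Rn :: "(nat \<Rightarrow> real) \<Rightarrow> nat set"
  assumes b: "0 < \<beta>" "\<beta> < 1" and r: "0 \<le> r" "r < c" "c < \<beta>"
    and n2: "2 \<le> n" and np: "real n powr (1-\<beta>) \<le> real n / 2"
    and nat: "natural_proc n Rn"
    and meas: "Rn \<in> measurable (PiM {..<n} (\<lambda>_. borel :: real measure)) (count_space UNIV)"
  shows "FDR \<beta> r n Rn + FNR \<beta> r n Rn \<ge> 1 - 1 / ((sqrt (2*c) - sqrt (2*r))\<^sup>2 * ln (real n))
           - 12 * sqrt (2*pi) * exp (1/2) * exp (- (\<beta> - c) * ln (real n) + sqrt (2 * c * ln (real n)))"
proof -
  define L where "L = ln (real n)"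
  have L0: "L > 0" unfolding L_def using n2 by simp
  have n0: "real n > 0" using n2 by simp
  define m where "m = m_of \<beta> n"
  define np' where "np' = real n powr (1-\<beta>)"
  have np1: "np' \<ge> 1" unfolding np'_def using n2 b by (intro ge_one_powr_ge_zero) auto
  have mle: "real m \<le> np'"
  proof -
    have "real m = real_of_int \<lfloor>np'\<rfloor>" unfolding m_def m_of_def np'_def[symmetric] using np1 by simp
    also have "\<dots> \<le> np'" by (rule of_int_floor_le)
    finally show ?thesis .
  qed
  have m1: "1 \<le> m" unfolding m_def m_of_def using np1 np'_def
    by (simp add: le_nat_iff one_le_floor)
  have mn: "m < n" using mle np n0 unfolding np'_def by linarith
  define t0 where "t0 = sqrt (2 * c * L)"
  define \<mu> where "\<mu> = sqrt (2 * r * L)"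
  define d where "d = t0 - \<mu>"
  have c0: "c > 0" using r by linarith
  have t00: "t0 \<ge> 0" unfolding t0_def using c0 L0 by simp
  have t0sq: "t0\<^sup>2 = 2 * c * L" unfolding t0_def using c0 L0 by (simp add: less_imp_le mult_nonneg_nonneg)
  have deq: "d = (sqrt (2*c) - sqrt (2*r)) * sqrt L"
    unfolding d_def t0_def \<mu>_def by (simp add: real_sqrt_mult algebra_simps)
  have sc: "sqrt (2*r) < sqrt (2*c)" using r by simp
  have d0: "d > 0" unfolding deq using sc L0 by simp
  have d2: "d\<^sup>2 = (sqrt (2*c) - sqrt (2*r))\<^sup>2 * L"
    unfolding deq using L0 by (simp add: power_mult_distrib)
  define q where "q = measure (density lborel (normal_density (sqrt (2 * r * ln (real n))) 1)) {x. t0 \<le> x}"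
  have qb: "q \<le> 1 / ((sqrt (2*c) - sqrt (2*r))\<^sup>2 * L)"
  proof -
    have "q = measure (density lborel (normal_density \<mu> 1)) {x. \<mu> + d \<le> x}"
      unfolding q_def \<mu>_def L_def d_def by simp
    also have "\<dots> \<le> 1 / d\<^sup>2" by (rule normal_tail_upper[OF d0])
    finally show ?thesis unfolding d2 .
  qed
  define P where "P = measure (density lborel (normal_density 0 1)) {x. t0 \<le> x}"
  define \<phi> where "\<phi> = normal_density 0 1 (t0 + 1)"
  have Pphi: "\<phi> \<le> P" unfolding P_def \<phi>_def by (rule normal_tail_lower[OF t00])
  have phi0: "\<phi> > 0" unfolding \<phi>_def by (simp add: normal_density_pos)
  have phieq: "\<phi> = exp (- (t0 + 1)\<^sup>2 / 2) / sqrt (2 * pi)"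
    unfolding \<phi>_def normal_density_def by simp
  have ob: "FDR \<beta> r n Rn + FNR \<beta> r n Rn \<ge> 1 - q - (4 + 2 * real m) / ((real n - real m) * P)"
    unfolding q_def P_def m_def
    by (rule outer_bound[OF _ _ nat meas]) (use m1 mn Pphi phi0 in \<open>auto simp: m_def P_def\<close>)
  have m1r: "real m \<ge> 1" using m1 by simp
  have nm: "real n / 2 \<le> real n - real m" using mle np unfolding np'_def by linarith
  have T1: "(4 + 2 * real m) / ((real n - real m) * P) \<le> (6 * real m) / ((real n / 2) * \<phi>)"
  proof (rule frac_le)
    show "(real n / 2) * \<phi> \<le> (real n - real m) * P"
      by (rule mult_mono) (use nm Pphi n0 phi0 in auto)
  qed (use m1r n0 phi0 in auto)
  have T2: "(6 * real m) / ((real n / 2) * \<phi>) \<le> 12 * np' / (real n * \<phi>)"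
  proof -
    have "(6 * real m) / ((real n / 2) * \<phi>) = 12 * real m / (real n * \<phi>)" by simp
    also have "\<dots> \<le> 12 * np' / (real n * \<phi>)"
      using mle n0 phi0 by (intro divide_right_mono) auto
    finally show ?thesis .
  qed
  have npe: "np' = exp ((1 - \<beta>) * L)" unfolding np'_def L_def using n0 by (simp add: powr_def)
  have ne: "real n = exp L" unfolding L_def using n0 by simp
  have T3: "12 * np' / (real n * \<phi>) = 12 * sqrt (2*pi) * exp (1/2) * exp (- (\<beta> - c) * L + t0)"
  proof -
    have "12 * np' / (real n * \<phi>) = 12 * sqrt (2*pi) * (exp ((1 - \<beta>) * L) * exp ((t0 + 1)\<^sup>2 / 2) / exp L)"
      unfolding phieq npe ne by (simp add: exp_minus field_simps)
    also have "exp ((1 - \<beta>) * L) * exp ((t0 + 1)\<^sup>2 / 2) / exp L = exp ((1 - \<beta>) * L + (t0 + 1)\<^sup>2 / 2 - L)"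
      by (simp add: exp_add exp_diff)
    also have "(1 - \<beta>) * L + (t0 + 1)\<^sup>2 / 2 - L = 1/2 + (- (\<beta> - c) * L + t0)"
      using t0sq by (simp add: power2_eq_square algebra_simps)
    also have "exp (1/2 + (- (\<beta> - c) * L + t0)) = exp (1/2) * exp (- (\<beta> - c) * L + t0)"
      by (rule exp_add)
    finally show ?thesis by simp
  qed
  show ?thesis
    using ob qb T1 T2 T3 unfolding t0_def L_def by linarith
qed


lemma aux_lin:
  fixes B a b e X y :: real
  shows "B = 1 - a - b \<Longrightarrow> a < e \<Longrightarrow> b < e \<Longrightarrow> B \<le> X \<Longrightarrow> e = (1 - y) / 2 \<Longrightarrow> y < X"
  by (simp add: field_simps)

theorem corollary1:
  fixes \<beta> r :: real and R :: "nat \<Rightarrow> (nat \<Rightarrow> real) \<Rightarrow> nat set"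
  assumes "0 < \<beta>" "\<beta> < 1" "0 \<le> r" "r < \<beta>"
    and "\<And>n. natural_proc n (R n)"
    and "\<And>n. R n \<in> measurable (PiM {..<n} (\<lambda>_. borel :: real measure)) (count_space UNIV)"
  shows "1 \<le> liminf (\<lambda>n. ereal (FDR \<beta> r n (R n) + FNR \<beta> r n (R n)))"
proof -
  define c where "c = (r + \<beta>) / 2"
  have c: "r < c" "c < \<beta>" "0 < c" using assms(3,4) unfolding c_def by auto
  define k where "k = (sqrt (2*c) - sqrt (2*r))\<^sup>2"
  have k0: "k > 0" unfolding k_def using c by simp
  define K where "K = 12 * sqrt (2*pi) * exp (1/2 :: real)"
  define H where "H = (\<lambda>n::nat. exp (- (\<beta> - c) * ln (real n) + sqrt (2 * c * ln (real n))))"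
  define B where "B = (\<lambda>n::nat. 1 - 1 / (k * ln (real n)) - K * H n)"
  have limA: "(\<lambda>n::nat. 1 / (k * ln (real n))) \<longlonglongrightarrow> 0" by (rule lim_a[OF k0])
  have limH: "H \<longlonglongrightarrow> 0" unfolding H_def using c by (intro lim_b) auto
  have limKH: "(\<lambda>n. K * H n) \<longlonglongrightarrow> 0" using tendsto_mult_right_zero[OF limH] by simp
  have evB: "eventually (\<lambda>n. B n \<le> FDR \<beta> r n (R n) + FNR \<beta> r n (R n)) sequentially"
  proof -
    have "eventually (\<lambda>n::nat. 2 \<le> n \<and> real n powr (1-\<beta>) \<le> real n / 2) sequentially"
      using ev_a[OF assms(1)] eventually_ge_at_top[of "2::nat"] by (rule eventually_conj[rotated])
    then show ?thesis
    proof (rule eventually_mono)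
      fix n :: nat assume n: "2 \<le> n \<and> real n powr (1-\<beta>) \<le> real n / 2"
      show "B n \<le> FDR \<beta> r n (R n) + FNR \<beta> r n (R n)"
        using per_n[OF assms(1,2,3) c(1,2) conjunct1[OF n] conjunct2[OF n] assms(5,6)]
        unfolding B_def k_def K_def H_def by simp
    qed
  qed
  show ?thesis
  proof (subst le_Liminf_iff, intro allI impI)
    fix y :: ereal assume y: "y < 1"
    show "eventually (\<lambda>n. y < ereal (FDR \<beta> r n (R n) + FNR \<beta> r n (R n))) sequentially"
    proof (cases y)
      case (real y0)
      then have y0: "y0 < 1" using y by simp
      define e where "e = (1 - y0) / 2"
      have e0: "e > 0" unfolding e_def using y0 by simp
      have e1: "eventually (\<lambda>n::nat. 1 / (k * ln (real n)) < e) sequentially"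
        using order_tendstoD(2)[OF limA e0] .
      have e2: "eventually (\<lambda>n. K * H n < e) sequentially"
        using order_tendstoD(2)[OF limKH e0] .
      show ?thesis using e1 e2 evB
      proof (eventually_elim)
        case (elim n)
        have "B n = 1 - 1 / (k * ln (real n)) - K * H n" by (simp add: B_def)
        then have "y0 < FDR \<beta> r n (R n) + FNR \<beta> r n (R n)" using elim e_def by (rule aux_lin)
        then show ?case using real by simp
      qed
    next
      case MInf
      then show ?thesis by simp
    next
      case PInf
      then show ?thesis using y by simp
    qed
  qed
qed


end
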